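(* Let $\mathcal{A}$ be Suslin, let $\Phi\colon\mathcal{A}\to\mathbb{R}$ be measurable and semibounded, let $\Psi\colon\mathcal{A}\to\mathbb{R}^n$ be measurable, let $Z\subseteq\mathbb{R}^n$ and $\Pi(Z):=\{\pi\in\mathcal{M}(\mathcal{A}):\mathbb{E}_\pi[\Psi]\in Z\}$. Let $\mathcal{D}$ be a metrizable Suslin space, $\mathbb{D}\colon\mathcal{A}\to\mathcal{M}(\mathcal{D})$ measurable and $B\subseteq\mathcal{D}$ open. Then $\mathcal{U}(\Pi(Z)\,|\,B)$ equals the supremum over $\alpha_0,\dots,\alpha_n\ge0$, $q\in Z$ and $\mu_0,\dots,\mu_n\in\mathcal{A}$ of $\sum_{i=0}^n\alpha_i\Phi(\mu_i)\mathbb{D}(\mu_i)[B]$ subject to the constraints $\sum_{i=0}^n\alpha_i(\Psi(\mu_i)-q)=0$ and $\sum_{i=0}^n\alpha_i\mathbb{D}(\mu_i)[B]=1$.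
   Context: $\mathcal{M}(\mathcal{Y})$: Borel probability measures. Posterior: for $\Pi\subseteq\mathcal{M}(\mathcal{A})$, $\Pi_B:=\{\pi\in\Pi:\mathbb{E}_{\mu\sim\pi}[\mathbb{D}(\mu)[B]]>0\}$, $\mathbb{E}_{\pi\odot\mathbb{D}}[\Phi|B]:=\mathbb{E}_{\mu\sim\pi}[\Phi(\mu)\mathbb{D}(\mu)[B]]/\mathbb{E}_{\mu\sim\pi}[\mathbb{D}(\mu)[B]]$, and $\mathcal{U}(\Pi|B):=\sup_{\pi\in\Pi_B}\mathbb{E}_{\pi\odot\mathbb{D}}[\Phi|B]$; suprema over empty sets are $-\infty$. Implicit in $\mathbb{E}_\pi[\Psi]\in Z$ is that the integral exists. *)

theory Defs
  imports "HOL-Probability.Probability"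
begin

text \<open>It is the value of the integral whenever the integral exists in the extended reals
  (at least one of the two parts finite), as is the case for semibounded integrands
  w.r.t. probability measures.\<close>
definition ext_integral :: "'a measure \<Rightarrow> ('a \<Rightarrow> real) \<Rightarrow> ereal" where
  "ext_integral M f =
     enn2ereal (\<integral>\<^sup>+ x. ennreal (f x) \<partial>M) - enn2ereal (\<integral>\<^sup>+ x. ennreal (- f x) \<partial>M)"

definition PiZ :: "('a::topological_space \<Rightarrow> 'v::{banach,second_countable_topology}) \<Rightarrow> 'v set
    \<Rightarrow> 'a measure set" where
  "PiZ Psi Z = {p. p \<in> space (prob_algebra borel) \<and> integrable p Psi \<and> (\<integral>x. Psi x \<partial>p) \<in> Z}"

definition Pi_cond :: "'a measure set \<Rightarrow> ('a \<Rightarrow> 'd measure) \<Rightarrow> 'd set \<Rightarrow> 'a measure set" where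
  "Pi_cond Prs D B = {p \<in> Prs. (\<integral>mu. measure (D mu) B \<partial>p) > 0}"

definition post_exp :: "'a measure \<Rightarrow> ('a \<Rightarrow> 'd measure) \<Rightarrow> ('a \<Rightarrow> real) \<Rightarrow> 'd set \<Rightarrow> ereal" where
  "post_exp p D Phi B =
     ext_integral p (\<lambda>mu. Phi mu * measure (D mu) B) / ereal (\<integral>mu. measure (D mu) B \<partial>p)"

text \<open>U(Pi | B) = sup over Pi_B of the posterior expectation (sup of empty set = -infinity).\<close>
definition U_post :: "'a measure set \<Rightarrow> ('a \<Rightarrow> 'd measure) \<Rightarrow> ('a \<Rightarrow> real) \<Rightarrow> 'd set \<Rightarrow> ereal" where
  "U_post Prs D Phi B = (SUP p \<in> Pi_cond Prs D B. post_exp p D Phi B)"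

end

theory Submission
  imports Defs
begin

lemma ext_integral_integrable:
  fixes f :: "'a \<Rightarrow> real"
  assumes f: "integrable M f"
  shows "ext_integral M f = ereal (integral\<^sup>L M f)"
proof -
  have ip: "integrable M (\<lambda>x. max 0 (f x))" using f by auto
  have im: "integrable M (\<lambda>x. max 0 (- f x))" using f by auto
  have 1: "(\<integral>\<^sup>+ x. ennreal (f x) \<partial>M) = ennreal (\<integral>x. max 0 (f x) \<partial>M)"
    using nn_integral_eq_integral[OF ip] by (simp add: ennreal_max_0)
  have 2: "(\<integral>\<^sup>+ x. ennreal (- f x) \<partial>M) = ennreal (\<integral>x. max 0 (- f x) \<partial>M)"
    using nn_integral_eq_integral[OF im] by (simp add: ennreal_max_0)
  have e: "(\<lambda>x. max 0 (f x) - max 0 (- f x)) = f" by (auto simp: fun_eq_iff max_def)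
  have 3: "integral\<^sup>L M f = (\<integral>x. max 0 (f x) \<partial>M) - (\<integral>x. max 0 (- f x) \<partial>M)"
    using Bochner_Integration.integral_diff[OF ip im] by (simp add: e)
  show ?thesis unfolding ext_integral_def 1 2 3
    by (simp add: integral_nonneg_AE)
qed


lemma mean_in_convex_hull_aux:
  fixes X :: "'a \<Rightarrow> 'b::euclidean_space"
  assumes P: "prob_space M" and iX: "integrable M X"
  shows "\<forall>R. nat (aff_dim R + 1) = k \<longrightarrow> (AE x in M. X x \<in> R) \<longrightarrow> integral\<^sup>L M X \<in> convex hull R"
proof (induction k rule: less_induct)
  case (less k)
  show ?case
  proof (intro allI impI, rule ccontr)
    fix R :: "'b set"
    assume k: "nat (aff_dim R + 1) = k" and ae: "AE x in M. X x \<in> R"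
      and notin: "integral\<^sup>L M X \<notin> convex hull R"
    define y where "y = integral\<^sup>L M X"
    define C where "C = convex hull R"
    have cC: "convex C" unfolding C_def by simp
    have RC: "R \<subseteq> C" unfolding C_def by (rule hull_subset)
    have yC: "y \<notin> C" using notin unfolding y_def C_def .
    have Rne: "R \<noteq> {}"
    proof
      assume "R = {}"
      with ae have "AE x in M. False" by simp
      with P show False by (simp add: prob_space.AE_False)
    qed
    show False
    proof (cases "y \<in> closure C")
      case False
      obtain a b where ab: "inner a y < b" "\<forall>x\<in>closure C. inner a x > b"
        using separating_hyperplane_closed_point[OF convex_closure[OF cC] closed_closure False] by blast
      have "AE x in M. b \<le> inner a (X x)"
        using ae proof (rule AE_mp, intro AE_I2 impI)
        fix x assume "X x \<in> R"
        then have "X x \<in> closure C" using RC closure_subset by blast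
        then show "b \<le> inner a (X x)" using ab(2) by fastforce
      qed
      then have "b \<le> (\<integral>x. inner a (X x) \<partial>M)"
        by (rule prob_space.integral_ge_const[OF P, rotated]) (use iX in auto)
      also have "\<dots> = inner a y" unfolding y_def using iX by simp
      finally show False using ab(1) by simp
    next
      case True
      have "rel_interior (closure C) = rel_interior C" by (rule convex_rel_interior_closure[OF cC])
      then have ynr: "y \<notin> rel_interior (closure C)" using yC rel_interior_subset by blast
      obtain a where a: "a \<noteq> 0" "\<And>z. z \<in> closure C \<Longrightarrow> inner a y \<le> inner a z"
          "\<And>z. z \<in> rel_interior (closure C) \<Longrightarrow> inner a y < inner a z"
        using supporting_hyperplane_rel_boundary[OF convex_closure[OF cC] True ynr] by blast
      define f where "f x = inner a (X x) - inner a y" for x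
      have if_: "integrable M f" unfolding f_def using iX P
        by (intro Bochner_Integration.integrable_diff integrable_inner_right) (use P[unfolded prob_space_def] in \<open>auto intro: finite_measure.integrable_const\<close>)
      have fnn: "AE x in M. 0 \<le> f x"
        using ae proof (rule AE_mp, intro AE_I2 impI)
        fix x assume "X x \<in> R"
        then have "X x \<in> closure C" using RC closure_subset by blast
        then show "0 \<le> f x" using a(2) unfolding f_def by fastforce
      qed
      have "integral\<^sup>L M f = inner a y - inner a y"
        unfolding f_def using iX P
        by (subst Bochner_Integration.integral_diff) (use P[unfolded prob_space_def] in \<open>auto simp: y_def prob_space.prob_space intro: finite_measure.integrable_const\<close>)
      then have "integral\<^sup>L M f = 0" by simp
      then have f0: "AE x in M. f x = 0" using integral_nonneg_eq_0_iff_AE[OF if_ fnn] by simp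
      define H where "H = {z. inner a z = inner a y}"
      define R' where "R' = R \<inter> H"
      have ae': "AE x in M. X x \<in> R'"
        using ae f0 by eventually_elim (auto simp: R'_def H_def f_def)
      have Cne: "C \<noteq> {}" using Rne RC by blast
      then obtain z0 where z0: "z0 \<in> rel_interior C"
        using rel_interior_eq_empty[OF cC] by blast
      have z0y: "inner a y < inner a z0" using a(3) z0
        using \<open>rel_interior (closure C) = rel_interior C\<close> by blast
      have affH: "affine H" unfolding H_def by (rule affine_hyperplane)
      have sub: "affine hull R' \<subseteq> affine hull R" unfolding R'_def by (intro hull_mono) auto
      have neq: "affine hull R' \<noteq> affine hull R"
      proof
        assume eq: "affine hull R' = affine hull R"
        have "affine hull R' \<subseteq> H" unfolding R'_def using affH by (intro hull_minimal) auto
        then have "C \<subseteq> H" using eq convex_hull_subset_affine_hull[of R] unfolding C_def by blast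
        then have "z0 \<in> H" using z0 rel_interior_subset by blast
        then show False using z0y unfolding H_def by simp
      qed
      have lt: "aff_dim R' < aff_dim R" using sub neq by (intro aff_dim_psubset) auto
      have "aff_dim R' \<ge> -1" by (simp add: aff_dim_geq)
      then have "nat (aff_dim R' + 1) < k" using lt k by linarith
      then have "y \<in> convex hull R'" using less ae' unfolding y_def by blast
      moreover have "convex hull R' \<subseteq> C" unfolding C_def R'_def by (intro hull_mono) auto
      ultimately show False using yC by blast
    qed
  qed
qed

lemma mean_in_convex_hull:
  fixes X :: "'a \<Rightarrow> 'b::euclidean_space"
  assumes P: "prob_space M" and iX: "integrable M X"
  shows "integral\<^sup>L M X \<in> convex hull (range X)"
  using mean_in_convex_hull_aux[OF P iX] by auto

lemma exists_dependency:
  fixes G :: "'a \<Rightarrow> 'v::euclidean_space"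
  assumes T: "finite T" and c: "card T > DIM('v)"
  shows "\<exists>\<gamma>. (\<exists>x\<in>T. \<gamma> x \<noteq> 0) \<and> (\<Sum>x\<in>T. \<gamma> x *\<^sub>R G x) = 0"
proof (cases "inj_on G T")
  case False
  then obtain x y where xy: "x \<in> T" "y \<in> T" "x \<noteq> y" "G x = G y" unfolding inj_on_def by blast
  define \<gamma> where "\<gamma> z = (if z = x then 1 else if z = y then -1 else (0::real))" for z
  have "(\<Sum>z\<in>T. \<gamma> z *\<^sub>R G z) = (\<Sum>z\<in>{x,y}. \<gamma> z *\<^sub>R G z)"
    using T xy by (intro sum.mono_neutral_right) (auto simp: \<gamma>_def)
  also have "\<dots> = 0" using xy by (simp add: \<gamma>_def)
  finally show ?thesis using xy by (intro exI[of _ \<gamma>]) (auto simp: \<gamma>_def)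
next
  case True
  have "card (G ` T) > DIM('v)" using True c by (simp add: card_image)
  then have "dependent (G ` T)" using independent_bound[of "G ` T"] by force
  then obtain t u where tu: "finite t" "t \<subseteq> G ` T" "\<exists>v\<in>t. u v \<noteq> 0" "(\<Sum>v\<in>t. u v *\<^sub>R v) = 0"
    unfolding dependent_explicit by blast
  define \<gamma> where "\<gamma> x = (if G x \<in> t then u (G x) else 0)" for x
  have "(\<Sum>x\<in>T. \<gamma> x *\<^sub>R G x) = (\<Sum>v\<in>G ` T. (if v \<in> t then u v else 0) *\<^sub>R v)"
    using True by (simp add: sum.reindex \<gamma>_def)
  also have "\<dots> = (\<Sum>v\<in>t. u v *\<^sub>R v)"
    using tu T by (intro sum.mono_neutral_cong_right) auto
  finally have s: "(\<Sum>x\<in>T. \<gamma> x *\<^sub>R G x) = 0" using tu by simp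
  obtain v where v: "v \<in> t" "u v \<noteq> 0" using tu by blast
  then obtain x where "x \<in> T" "G x = v" using tu by blast
  then have "\<gamma> x \<noteq> 0" using v by (simp add: \<gamma>_def)
  then show ?thesis using s \<open>x \<in> T\<close> by blast
qed

lemma reduce_support:
  fixes G :: "'a \<Rightarrow> 'v::euclidean_space" and k :: "'a \<Rightarrow> real"
  assumes e: "\<And>x. inner e (G x) \<ge> 0" "\<And>x. inner e (G x) = 0 \<Longrightarrow> k x = 0"
  shows "finite T \<Longrightarrow> card T = N \<Longrightarrow> (\<forall>x\<in>T. \<alpha> x \<ge> 0) \<Longrightarrow> (\<Sum>x\<in>T. \<alpha> x *\<^sub>R G x) = g \<Longrightarrow>
    \<exists>S \<beta>. S \<subseteq> T \<and> card S \<le> DIM('v) \<and> (\<forall>x\<in>S. \<beta> x \<ge> 0) \<and> (\<Sum>x\<in>S. \<beta> x *\<^sub>R G x) = g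
       \<and> (\<Sum>x\<in>T. \<alpha> x * k x) \<le> (\<Sum>x\<in>S. \<beta> x * k x)"
proof (induction N arbitrary: T \<alpha> rule: less_induct)
  case (less N)
  note T = less.prems(1) and cT = less.prems(2) and \<alpha>0 = less.prems(3) and sg = less.prems(4)
  show ?case
  proof (cases "card T \<le> DIM('v)")
    case True
    then show ?thesis using \<alpha>0 sg by (intro exI[of _ T] exI[of _ \<alpha>]) auto
  next
    case False
    then obtain \<gamma> where \<gamma>: "\<exists>x\<in>T. \<gamma> x \<noteq> 0" "(\<Sum>x\<in>T. \<gamma> x *\<^sub>R G x) = 0"
      using exists_dependency[OF T, of G] by force
    have "\<exists>\<delta>. (\<exists>x\<in>T. \<delta> x < 0) \<and> (\<Sum>x\<in>T. \<delta> x *\<^sub>R G x) = 0 \<and> 0 \<le> (\<Sum>x\<in>T. \<delta> x * k x)"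
    proof (cases "\<exists>x\<in>T. \<gamma> x < 0")
      case neg: True
      show ?thesis
      proof (cases "0 \<le> (\<Sum>x\<in>T. \<gamma> x * k x)")
        case True then show ?thesis using neg \<gamma> by blast
      next
        case False
        have p: "\<not> (\<forall>x\<in>T. \<gamma> x \<le> 0)"
        proof
          assume np: "\<forall>x\<in>T. \<gamma> x \<le> 0"
          have "(\<Sum>x\<in>T. (- \<gamma> x) * inner e (G x)) = - inner e (\<Sum>x\<in>T. \<gamma> x *\<^sub>R G x)"
            by (simp add: inner_sum_right sum_negf)
          also have "\<dots> = 0" using \<gamma> by simp
          finally have "\<forall>x\<in>T. (- \<gamma> x) * inner e (G x) = 0"
            using T np e(1) by (subst (asm) sum_nonneg_eq_0_iff) (auto intro: mult_nonpos_nonneg)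
          then have "\<forall>x\<in>T. \<gamma> x * k x = 0" using e(2) by fastforce
          then have "(\<Sum>x\<in>T. \<gamma> x * k x) = 0" by (intro sum.neutral) auto
          then show False using False by simp
        qed
        then show ?thesis using \<gamma> False
          by (intro exI[of _ "\<lambda>x. - \<gamma> x"]) (auto simp: sum_negf not_le)
      qed
    next
      case False
      then have np: "\<forall>x\<in>T. \<gamma> x \<ge> 0" by auto
      have "(\<Sum>x\<in>T. \<gamma> x * inner e (G x)) = inner e (\<Sum>x\<in>T. \<gamma> x *\<^sub>R G x)"
        by (simp add: inner_sum_right)
      also have "\<dots> = 0" using \<gamma> by simp
      finally have "\<forall>x\<in>T. \<gamma> x * inner e (G x) = 0"
        using T np e(1) by (subst (asm) sum_nonneg_eq_0_iff) (auto intro: mult_nonneg_nonneg)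
      then have "\<forall>x\<in>T. \<gamma> x * k x = 0" using e(2) by fastforce
      then have z: "(\<Sum>x\<in>T. \<gamma> x * k x) = 0" by (intro sum.neutral) auto
      obtain x where "x \<in> T" "\<gamma> x \<noteq> 0" using \<gamma> by blast
      then have "- \<gamma> x < 0" using np by force
      then show ?thesis using \<gamma> z \<open>x \<in> T\<close>
        by (intro exI[of _ "\<lambda>x. - \<gamma> x"]) (auto simp: sum_negf)
    qed
    then obtain \<delta> where \<delta>: "\<exists>x\<in>T. \<delta> x < 0" "(\<Sum>x\<in>T. \<delta> x *\<^sub>R G x) = 0" "0 \<le> (\<Sum>x\<in>T. \<delta> x * k x)"
      by blast
    define NN where "NN = {x\<in>T. \<delta> x < 0}"
    define f where "f x = \<alpha> x / (- \<delta> x)" for x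
    have fN: "finite NN" "NN \<noteq> {}" using T \<delta>(1) by (auto simp: NN_def)
    obtain x0 where x0: "x0 \<in> NN" "f x0 = Min (f ` NN)"
    proof -
      have "Min (f ` NN) \<in> f ` NN" using fN by (intro Min_in) auto
      then show ?thesis using that by force
    qed
    have x0min: "\<And>x. x \<in> NN \<Longrightarrow> f x0 \<le> f x" using x0 fN by simp
    define s where "s = f x0"
    have x0': "x0 \<in> T" "\<delta> x0 < 0" using x0(1) by (auto simp: NN_def)
    have s0: "s \<ge> 0" using x0' \<alpha>0 unfolding s_def f_def by (auto intro: divide_nonneg_neg)
    define \<alpha>' where "\<alpha>' x = \<alpha> x + s * \<delta> x" for x
    have \<alpha>'0: "\<forall>x\<in>T. \<alpha>' x \<ge> 0"
    proof
      fix x assume xT: "x \<in> T"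
      show "\<alpha>' x \<ge> 0"
      proof (cases "\<delta> x < 0")
        case True
        then have "s \<le> \<alpha> x / (- \<delta> x)" using x0min[of x] xT unfolding s_def f_def NN_def by auto
        then have "s * (- \<delta> x) \<le> \<alpha> x" using True by (subst (asm) pos_le_divide_eq) auto
        then show ?thesis unfolding \<alpha>'_def by simp
      next
        case False
        then show ?thesis using s0 \<alpha>0 xT unfolding \<alpha>'_def by simp
      qed
    qed
    have x0T: "x0 \<in> T" using x0 by (simp add: NN_def)
    have ax0: "\<alpha>' x0 = 0" using x0' unfolding \<alpha>'_def s_def f_def NN_def by auto
    have sg': "(\<Sum>x\<in>T. \<alpha>' x *\<^sub>R G x) = g"
    proof -
      have "(\<Sum>x\<in>T. (s * \<delta> x) *\<^sub>R G x) = s *\<^sub>R (\<Sum>x\<in>T. \<delta> x *\<^sub>R G x)"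
        by (simp add: scaleR_sum_right)
      then show ?thesis using sg \<delta>(2) by (simp add: \<alpha>'_def scaleR_add_left sum.distrib)
    qed
    have sk': "(\<Sum>x\<in>T. \<alpha> x * k x) \<le> (\<Sum>x\<in>T. \<alpha>' x * k x)"
    proof -
      have "(\<Sum>x\<in>T. \<alpha>' x * k x) = (\<Sum>x\<in>T. \<alpha> x * k x) + s * (\<Sum>x\<in>T. \<delta> x * k x)"
        by (simp add: \<alpha>'_def distrib_right sum.distrib sum_distrib_left mult.assoc)
      then show ?thesis using s0 \<delta>(3) by simp
    qed
    define T' where "T' = T - {x0}"
    have T'f: "finite T'" and cT': "card T' < N" using T x0T cT card_gt_0_iff[of T] by (auto simp: T'_def)
    have sg'': "(\<Sum>x\<in>T'. \<alpha>' x *\<^sub>R G x) = g"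
      using sg' sum.remove[OF T x0T, of "\<lambda>x. \<alpha>' x *\<^sub>R G x"] ax0 by (simp add: T'_def)
    have sk'': "(\<Sum>x\<in>T'. \<alpha>' x * k x) = (\<Sum>x\<in>T. \<alpha>' x * k x)"
      using sum.remove[OF T x0T, of "\<lambda>x. \<alpha>' x * k x"] ax0 by (simp add: T'_def)
    obtain S \<beta> where S: "S \<subseteq> T'" "card S \<le> DIM('v)" "\<forall>x\<in>S. \<beta> x \<ge> 0" "(\<Sum>x\<in>S. \<beta> x *\<^sub>R G x) = g"
       "(\<Sum>x\<in>T'. \<alpha>' x * k x) \<le> (\<Sum>x\<in>S. \<beta> x * k x)"
      using less.IH[OF cT' T'f refl _ sg''] \<alpha>'0 by (auto simp: T'_def)
    show ?thesis using S sk' sk'' by (intro exI[of _ S] exI[of _ \<beta>]) (auto simp: T'_def)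
  qed
qed

lemma integrable_pair:
  fixes f :: "'a \<Rightarrow> 'b::euclidean_space" and g :: "'a \<Rightarrow> 'c::euclidean_space"
  assumes "integrable M f" "integrable M g"
  shows "integrable M (\<lambda>x. (f x, g x))"
proof -
  have bl1: "bounded_linear (\<lambda>v::'b. (v, 0::'c))"
    by (intro bounded_linear_Pair bounded_linear_ident bounded_linear_zero)
  have bl2: "bounded_linear (\<lambda>v::'c. (0::'b, v))"
    by (intro bounded_linear_Pair bounded_linear_ident bounded_linear_zero)
  have "integrable M (\<lambda>x. (f x, 0::'c) + (0::'b, g x))"
    by (intro Bochner_Integration.integrable_add integrable_bounded_linear[OF bl1] integrable_bounded_linear[OF bl2] assms)
  then show ?thesis by simp
qed

lemma integral_pair:
  fixes f :: "'a \<Rightarrow> 'b::euclidean_space" and g :: "'a \<Rightarrow> 'c::euclidean_space"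
  assumes "integrable M f" "integrable M g"
  shows "integral\<^sup>L M (\<lambda>x. (f x, g x)) = (integral\<^sup>L M f, integral\<^sup>L M g)"
proof -
  have bl1: "bounded_linear (\<lambda>v::'b. (v, 0::'c))"
    by (intro bounded_linear_Pair bounded_linear_ident bounded_linear_zero)
  have bl2: "bounded_linear (\<lambda>v::'c. (0::'b, v))"
    by (intro bounded_linear_Pair bounded_linear_ident bounded_linear_zero)
  have "integral\<^sup>L M (\<lambda>x. (f x, g x)) = integral\<^sup>L M (\<lambda>x. (f x, 0::'c) + (0::'b, g x))" by simp
  also have "\<dots> = integral\<^sup>L M (\<lambda>x. (f x, 0::'c)) + integral\<^sup>L M (\<lambda>x. (0::'b, g x))"
    by (intro Bochner_Integration.integral_add integrable_bounded_linear[OF bl1] integrable_bounded_linear[OF bl2] assms)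
  also have "\<dots> = (integral\<^sup>L M f, 0) + (0, integral\<^sup>L M g)"
    using integral_bounded_linear[OF bl1 assms(1)] integral_bounded_linear[OF bl2 assms(2)] by simp
  finally show ?thesis by simp
qed

lemma enum_sum:
  fixes F :: "'a \<Rightarrow> 'v::real_vector"
  assumes "bij_betw h {0..<card S} S" "card S \<le> Suc N"
  shows "(\<Sum>i\<in>{0..N}. (if i < card S then \<beta> (h i) else 0) *\<^sub>R F (h i)) = (\<Sum>x\<in>S. \<beta> x *\<^sub>R F x)"
proof -
  have "(\<Sum>i\<in>{0..N}. (if i < card S then \<beta> (h i) else 0) *\<^sub>R F (h i)) = (\<Sum>i\<in>{0..<card S}. \<beta> (h i) *\<^sub>R F (h i))"
    using assms(2) by (intro sum.mono_neutral_cong_right) auto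
  also have "\<dots> = (\<Sum>x\<in>S. \<beta> x *\<^sub>R F x)"
    using sum.reindex_bij_betw[OF assms(1), of "\<lambda>x. \<beta> x *\<^sub>R F x"] by simp
  finally show ?thesis .
qed

lemma key:
  fixes Phi Phi' w :: "'a \<Rightarrow> real" and Psi :: "'a \<Rightarrow> real ^ 'n" and p :: "'a measure"
  assumes P: "prob_space p" and iPsi: "integrable p Psi"
   and iw: "integrable p w" and w0: "\<And>x. 0 \<le> w x" and c: "integral\<^sup>L p w > 0"
   and le: "\<And>x. Phi' x \<le> Phi x" and ih: "integrable p (\<lambda>x. Phi' x * w x)"
  shows "\<exists>alpha m. (\<forall>i\<in>{0..CARD('n)}. alpha i \<ge> 0)
     \<and> (\<Sum>i\<in>{0..CARD('n)}. alpha i *\<^sub>R (Psi (m i) - integral\<^sup>L p Psi)) = 0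
     \<and> (\<Sum>i\<in>{0..CARD('n)}. alpha i * w (m i)) = 1
     \<and> (\<integral>x. Phi' x * w x \<partial>p) / integral\<^sup>L p w \<le> (\<Sum>i\<in>{0..CARD('n)}. alpha i * Phi (m i) * w (m i))"
proof -
  define q where "q = integral\<^sup>L p Psi"
  define cc where "cc = integral\<^sup>L p w"
  define E where "E = (\<integral>x. Phi' x * w x \<partial>p)"
  define G where "G x = (Psi x - q, w x)" for x
  define X where "X x = (G x, Phi' x * w x)" for x
  have fm: "finite_measure p" using P by (simp add: prob_space_def)
  have ic: "integrable p (\<lambda>x. q)" using fm by (simp add: finite_measure.integrable_const)
  have iPq: "integrable p (\<lambda>x. Psi x - q)" using iPsi ic by (intro Bochner_Integration.integrable_diff)
  have iG: "integrable p G" unfolding G_def by (intro integrable_pair iPq iw)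
  have iX: "integrable p X" unfolding X_def by (intro integrable_pair iG ih)
  have "integral\<^sup>L p (\<lambda>x. Psi x - q) = q - q"
    using iPsi ic P by (simp add: Bochner_Integration.integral_diff q_def prob_space.prob_space)
  moreover have "G = (\<lambda>x. (Psi x - q, w x))" by (simp add: fun_eq_iff G_def)
  moreover have "X = (\<lambda>x. (G x, Phi' x * w x))" by (simp add: fun_eq_iff X_def)
  ultimately have intX: "integral\<^sup>L p X = ((0, cc), E)"
    unfolding cc_def E_def using integral_pair[OF iPq iw] integral_pair[OF iG ih] by simp
  have "integral\<^sup>L p X \<in> convex hull (range X)" by (rule mean_in_convex_hull[OF P iX])
  then obtain S u where Su: "finite S" "S \<subseteq> range X" "\<forall>x\<in>S. 0 \<le> u x" "sum u S = 1"
      "(\<Sum>v\<in>S. u v *\<^sub>R v) = ((0, cc), E)"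
    unfolding convex_hull_explicit intX by blast
  define g where "g v = (SOME x. X x = v)" for v
  have Xg: "X (g v) = v" if "v \<in> S" for v
  proof -
    have "\<exists>x. X x = v" using that Su(2) by blast
    then show ?thesis unfolding g_def by (rule someI_ex)
  qed
  have inj: "inj_on g S" by (rule inj_onI) (metis Xg)
  define T where "T = g ` S"
  define \<alpha> where "\<alpha> x = u (X x) / cc" for x
  have ccpos: "cc > 0" using c by (simp add: cc_def)
  have T: "finite T" using Su(1) by (simp add: T_def)
  have \<alpha>0: "\<forall>x\<in>T. \<alpha> x \<ge> 0" using Su(3) ccpos Xg by (auto simp: T_def \<alpha>_def)
  have sG: "(\<Sum>x\<in>T. \<alpha> x *\<^sub>R G x) = (0, 1)"
  proof -
    have "(\<Sum>x\<in>T. \<alpha> x *\<^sub>R G x) = (\<Sum>v\<in>S. \<alpha> (g v) *\<^sub>R G (g v))"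
      unfolding T_def by (rule sum.reindex[OF inj, unfolded comp_def])
    also have "\<dots> = (\<Sum>v\<in>S. (u v / cc) *\<^sub>R fst v)"
    proof (rule sum.cong[OF refl])
      fix v assume "v \<in> S"
      then have xv: "X (g v) = v" by (rule Xg)
      have "G (g v) = fst v" using arg_cong[OF xv, of fst] by (simp add: X_def)
      then show "\<alpha> (g v) *\<^sub>R G (g v) = (u v / cc) *\<^sub>R fst v" using xv by (simp add: \<alpha>_def)
    qed
    also have "\<dots> = (1/cc) *\<^sub>R fst (\<Sum>v\<in>S. u v *\<^sub>R v)"
      by (simp add: fst_sum scaleR_sum_right)
    also have "\<dots> = (0,1)" using Su(5) ccpos by simp
    finally show ?thesis .
  qed
  have sk: "(\<Sum>x\<in>T. \<alpha> x * (Phi' x * w x)) = E / cc"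
  proof -
    have "(\<Sum>x\<in>T. \<alpha> x * (Phi' x * w x)) = (\<Sum>v\<in>S. \<alpha> (g v) * (Phi' (g v) * w (g v)))"
      unfolding T_def by (rule sum.reindex[OF inj, unfolded comp_def])
    also have "\<dots> = (\<Sum>v\<in>S. (u v / cc) * snd v)"
    proof (rule sum.cong[OF refl])
      fix v assume "v \<in> S"
      then have xv: "X (g v) = v" by (rule Xg)
      have "Phi' (g v) * w (g v) = snd v" using arg_cong[OF xv, of snd] by (simp add: X_def)
      then show "\<alpha> (g v) * (Phi' (g v) * w (g v)) = (u v / cc) * snd v" using xv by (simp add: \<alpha>_def)
    qed
    also have "\<dots> = (1/cc) * snd (\<Sum>v\<in>S. u v *\<^sub>R v)"
      by (simp add: snd_sum sum_distrib_left)
    also have "\<dots> = E / cc" using Su(5) ccpos by simp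
    finally show ?thesis .
  qed
  have sk2: "(\<Sum>x\<in>T. \<alpha> x * (Phi' x * w x)) \<le> (\<Sum>x\<in>T. \<alpha> x * (Phi x * w x))"
    using \<alpha>0 le w0 by (intro sum_mono mult_left_mono mult_right_mono) auto
  have e1: "\<And>x. inner ((0::real^'n), (1::real)) (G x) \<ge> 0" using w0 by (simp add: G_def)
  have e2: "\<And>x. inner ((0::real^'n), (1::real)) (G x) = 0 \<Longrightarrow> Phi x * w x = 0" by (simp add: G_def)
  have rs: "\<exists>S' \<beta>. S' \<subseteq> T \<and> card S' \<le> DIM((real^'n) \<times> real) \<and> (\<forall>x\<in>S'. \<beta> x \<ge> 0) \<and>
     (\<Sum>x\<in>S'. \<beta> x *\<^sub>R G x) = (0,1) \<and> (\<Sum>x\<in>T. \<alpha> x * (Phi x * w x)) \<le> (\<Sum>x\<in>S'. \<beta> x * (Phi x * w x))"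
    by (rule reduce_support[OF e1 _ T refl \<alpha>0 sG]) (rule e2)
  then obtain S' \<beta> where S': "S' \<subseteq> T" "card S' \<le> DIM((real^'n) \<times> real)" "\<forall>x\<in>S'. \<beta> x \<ge> 0"
     "(\<Sum>x\<in>S'. \<beta> x *\<^sub>R G x) = (0,1)" "(\<Sum>x\<in>T. \<alpha> x * (Phi x * w x)) \<le> (\<Sum>x\<in>S'. \<beta> x * (Phi x * w x))"
    by (elim exE conjE)
  have S'f: "finite S'" using S'(1) T finite_subset by blast
  have cS': "card S' \<le> Suc CARD('n)" using S'(2) by simp
  obtain h where h: "bij_betw h {0..<card S'} S'" using ex_bij_betw_nat_finite[OF S'f] by blast
  define alpha where "alpha i = (if i < card S' then \<beta> (h i) else 0)" for i
  have a0: "\<forall>i\<in>{0..CARD('n)}. alpha i \<ge> 0"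
    using S'(3) h by (auto simp: alpha_def bij_betw_def)
  have s1: "(\<Sum>i\<in>{0..CARD('n)}. alpha i *\<^sub>R G (h i)) = (0,1)"
    unfolding alpha_def enum_sum[OF h cS'] by (rule S'(4))
  have s1a: "(\<Sum>i\<in>{0..CARD('n)}. alpha i *\<^sub>R (Psi (h i) - q)) = 0"
    using arg_cong[OF s1, of fst] by (simp add: fst_sum G_def)
  have s1b: "(\<Sum>i\<in>{0..CARD('n)}. alpha i * w (h i)) = 1"
    using arg_cong[OF s1, of snd] by (simp add: snd_sum G_def)
  have s2: "(\<Sum>i\<in>{0..CARD('n)}. alpha i * Phi (h i) * w (h i)) = (\<Sum>x\<in>S'. \<beta> x * (Phi x * w x))"
    using enum_sum[OF h cS', of \<beta> "\<lambda>x. Phi x * w x"] by (simp add: alpha_def mult.assoc)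
  have "E / cc \<le> (\<Sum>i\<in>{0..CARD('n)}. alpha i * Phi (h i) * w (h i))"
    using sk sk2 S'(5) s2 by linarith
  then show ?thesis using a0 s1a s1b unfolding q_def cc_def E_def by (intro exI[of _ alpha] exI[of _ h] conjI)
qed

definition fsm :: "nat \<Rightarrow> (nat \<Rightarrow> real) \<Rightarrow> (nat \<Rightarrow> 'a::topological_space) \<Rightarrow> 'a measure" where
  "fsm N alpha m = distr (measure_pmf (pmf_of_list (map (\<lambda>i. (i, alpha i / (\<Sum>j\<in>{0..N}. alpha j))) [0..<Suc N]))) borel m"

lemma fsm_facts:
  fixes alpha :: "nat \<Rightarrow> real" and m :: "nat \<Rightarrow> 'a::topological_space"
  assumes a0: "\<forall>i\<in>{0..N}. alpha i \<ge> 0" and Spos: "(\<Sum>i\<in>{0..N}. alpha i) > 0"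
  shows "fsm N alpha m \<in> space (prob_algebra borel)"
    and "\<And>f::'a \<Rightarrow> 'b::{banach,second_countable_topology}. f \<in> borel_measurable borel \<Longrightarrow>
          integrable (fsm N alpha m) f \<and>
          integral\<^sup>L (fsm N alpha m) f = (\<Sum>i\<in>{0..N}. (alpha i / (\<Sum>j\<in>{0..N}. alpha j)) *\<^sub>R f (m i))"
proof -
  define S where "S = (\<Sum>j\<in>{0..N}. alpha j)"
  define xs where "xs = map (\<lambda>i. (i, alpha i / S)) [0..<Suc N]"
  define P where "P = pmf_of_list xs"
  have ivl: "{0..N} = {0..<Suc N}" by auto
  have wf: "pmf_of_list_wf xs"
  proof (rule pmf_of_list_wfI)
    fix x assume "x \<in> set (map snd xs)"
    then show "x \<ge> 0" using a0 Spos by (auto simp: xs_def S_def)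
  next
    have "sum_list (map snd xs) = (\<Sum>i\<in>{0..<Suc N}. alpha i / S)"
      by (simp add: xs_def o_def sum_set_upt_conv_sum_list_nat[symmetric])
    also have "\<dots> = S / S" by (simp add: sum_divide_distrib[symmetric] S_def ivl)
    finally show "sum_list (map snd xs) = 1" using Spos by (simp add: S_def)
  qed
  have pmfP: "pmf P i = alpha i / S" if "i \<in> {0..N}" for i
  proof -
    have "pmf P i = sum_list (map snd (filter (\<lambda>z. fst z = i) xs))"
      unfolding P_def by (rule pmf_pmf_of_list[OF wf])
    also have "\<dots> = sum_list (map (\<lambda>z. if fst z = i then snd z else 0) xs)"
      by (simp add: sum_list_map_filter')
    also have "\<dots> = (\<Sum>j\<in>{0..<Suc N}. if j = i then alpha j / S else 0)"
      by (simp add: xs_def o_def sum_set_upt_conv_sum_list_nat[symmetric])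
    also have "\<dots> = alpha i / S" using that by simp
    finally show ?thesis .
  qed
  have setP: "set_pmf P \<subseteq> {0..N}"
    using set_pmf_of_list[OF wf] by (auto simp: P_def xs_def)
  have fsm_eq: "fsm N alpha m = distr (measure_pmf P) borel m"
    by (simp add: fsm_def P_def xs_def S_def)
  have mm: "m \<in> measurable (measure_pmf P) borel" by simp
  show "fsm N alpha m \<in> space (prob_algebra borel)"
    unfolding fsm_eq space_prob_algebra
    by (auto intro!: prob_space.prob_space_distr[OF prob_space_measure_pmf mm])
  fix f :: "'a \<Rightarrow> 'b::{banach,second_countable_topology}"
  assume fm: "f \<in> borel_measurable borel"
  have fin: "finite (set_pmf P)" using setP finite_subset by blast
  have "integrable (measure_pmf P) (\<lambda>x. f (m x))" by (rule integrable_measure_pmf_finite[OF fin])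
  then have i1: "integrable (fsm N alpha m) f"
    unfolding fsm_eq by (subst integrable_distr_eq[OF mm fm])
  have "integral\<^sup>L (fsm N alpha m) f = integral\<^sup>L (measure_pmf P) (\<lambda>x. f (m x))"
    unfolding fsm_eq by (rule integral_distr[OF mm fm])
  also have "\<dots> = (\<Sum>i\<in>{0..N}. pmf P i *\<^sub>R f (m i))"
    by (rule integral_measure_pmf) (use setP in auto)
  also have "\<dots> = (\<Sum>i\<in>{0..N}. (alpha i / S) *\<^sub>R f (m i))"
    by (rule sum.cong) (auto simp: pmfP)
  finally show "integrable (fsm N alpha m) f \<and>
          integral\<^sup>L (fsm N alpha m) f = (\<Sum>i\<in>{0..N}. (alpha i / (\<Sum>j\<in>{0..N}. alpha j)) *\<^sub>R f (m i))"
    using i1 by (simp add: S_def)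
qed

lemma ennreal_abs_split: "ennreal \<bar>x::real\<bar> = ennreal x + ennreal (- x)"
  by (cases "x \<ge> 0") (auto simp: ennreal_neg)

lemma lower_mult_bound: "- a \<le> (y::real) \<Longrightarrow> 0 \<le> a \<Longrightarrow> 0 \<le> w \<Longrightarrow> w \<le> 1 \<Longrightarrow> - a \<le> y * w"
proof (cases "y \<ge> 0")
  case True
  assume "0 \<le> a" "0 \<le> w"
  then show ?thesis using True by (smt (verit) mult_nonneg_nonneg)
next
  case False
  assume "- a \<le> y" "0 \<le> w" "w \<le> 1"
  then have "y \<le> y * w" using False by (smt (verit) mult_left_mono_neg mult_cancel_left1)
  then show ?thesis using \<open>- a \<le> y\<close> by linarith
qed

theorem theorem4p8:
  fixes f :: "'p::polish_space \<Rightarrow> 'a::t2_space"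
    and g :: "'q::polish_space \<Rightarrow> 'd::topological_space"
    and Phi :: "'a \<Rightarrow> real"
    and Psi :: "'a \<Rightarrow> real ^ 'n"
    and Z :: "(real ^ 'n) set"
    and D :: "'a \<Rightarrow> 'd measure"
    and B :: "'d set"
  assumes A_suslin: "continuous_on UNIV f" "surj f"
    and Phi_meas: "Phi \<in> borel_measurable borel"
    and Phi_semibounded: "bdd_above (range Phi) \<or> bdd_below (range Phi)"
    and Psi_meas: "Psi \<in> borel_measurable borel"
    and D_metrizable: "metrizable_space (euclidean :: 'd topology)"
    and D_suslin: "continuous_on UNIV g" "surj g"
    and D_meas: "D \<in> measurable borel (prob_algebra borel)"
    and B_open: "open B"
  shows "U_post (PiZ Psi Z) D Phi B =
    (SUP (alpha, q, m) \<in> {(alpha :: nat \<Rightarrow> real, q, m :: nat \<Rightarrow> 'a).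
         (\<forall>i\<in>{0..CARD('n)}. alpha i \<ge> 0) \<and> q \<in> Z \<and>
         (\<Sum>i\<in>{0..CARD('n)}. alpha i *\<^sub>R (Psi (m i) - q)) = 0 \<and>
         (\<Sum>i\<in>{0..CARD('n)}. alpha i * measure (D (m i)) B) = 1}.
       ereal (\<Sum>i\<in>{0..CARD('n)}. alpha i * Phi (m i) * measure (D (m i)) B))"
    (is "_ = (SUP (alpha, q, m) \<in> ?RS. ?F alpha q m)")
proof -
  define w where "w mu = measure (D mu) B" for mu
  have wfun: "w = (\<lambda>mu. measure (D mu) B)" by (simp add: fun_eq_iff w_def)
  define Rv where "Rv = (SUP (alpha, q, m) \<in> ?RS. ?F alpha q m)"
  have Dsp: "D mu \<in> space (prob_algebra borel)" for mu
    using measurable_space[OF D_meas, of mu] by simp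
  have Dps: "prob_space (D mu)" for mu using Dsp[of mu] by (simp add: space_prob_algebra)
  have w0: "0 \<le> w mu" for mu by (simp add: w_def)
  have w1: "w mu \<le> 1" for mu unfolding w_def by (rule prob_space.prob_le_1[OF Dps])
  have wm: "w \<in> borel_measurable borel" unfolding w_def using D_meas B_open by measurable
  have hm: "(\<lambda>x. Phi x * w x) \<in> borel_measurable borel" using Phi_meas wm by measurable
  have elem: "ereal (\<Sum>i\<in>{0..CARD('n)}. alpha i * Phi (m i) * w (m i)) \<le> Rv"
    if "(\<forall>i\<in>{0..CARD('n)}. alpha i \<ge> 0)" "q \<in> Z"
       "(\<Sum>i\<in>{0..CARD('n)}. alpha i *\<^sub>R (Psi (m i) - q)) = 0"
       "(\<Sum>i\<in>{0..CARD('n)}. alpha i * w (m i)) = 1" for alpha q m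
  proof -
    have "(alpha, q, m) \<in> ?RS" using that by (simp add: w_def)
    then show ?thesis unfolding Rv_def w_def by (rule SUP_upper2) simp
  qed
  have le1: "U_post (PiZ Psi Z) D Phi B \<le> Rv"
    unfolding U_post_def
  proof (rule SUP_least)
    fix p assume pin: "p \<in> Pi_cond (PiZ Psi Z) D B"
    then have pA: "p \<in> space (prob_algebra borel)" and iPsi: "integrable p Psi"
      and qZ: "integral\<^sup>L p Psi \<in> Z" and cpos0: "(\<integral>mu. measure (D mu) B \<partial>p) > 0"
      by (auto simp: Pi_cond_def PiZ_def)
    have P: "prob_space p" and sp: "sets p = sets borel" using pA by (auto simp: space_prob_algebra)
    have fmp: "finite_measure p" using P by (simp add: prob_space_def)
    have mp: "h \<in> borel_measurable p" if "h \<in> borel_measurable borel" for h :: "'a \<Rightarrow> real"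
    proof -
      have "measurable p (borel::real measure) = measurable borel borel" by (rule measurable_cong_sets[OF sp]) simp
      then show ?thesis using that by simp
    qed
    have bnd: "integrable p h" if "h \<in> borel_measurable borel" "\<And>x. \<bar>h x\<bar> \<le> K" for h :: "'a \<Rightarrow> real" and K
    proof (rule finite_measure.integrable_const_bound[OF fmp, where B = K])
      show "AE x in p. norm (h x) \<le> K" using that(2) by simp
      show "h \<in> borel_measurable p" using mp[OF that(1)] .
    qed
    have iw: "integrable p w" by (rule bnd[OF wm, of 1]) (use w0 w1 in auto)
    have cpos: "integral\<^sup>L p w > 0" using cpos0 by (simp add: wfun)
    have keyR: "ereal ((\<integral>x. Phi' x * w x \<partial>p) / integral\<^sup>L p w) \<le> Rv"
      if lePhi: "\<And>x. Phi' x \<le> Phi x" and ihPhi: "integrable p (\<lambda>x. Phi' x * w x)" for Phi'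
    proof -
      obtain alpha m where am: "(\<forall>i\<in>{0..CARD('n)}. alpha i \<ge> 0)"
        "(\<Sum>i\<in>{0..CARD('n)}. alpha i *\<^sub>R (Psi (m i) - integral\<^sup>L p Psi)) = 0"
        "(\<Sum>i\<in>{0..CARD('n)}. alpha i * w (m i)) = 1"
        "(\<integral>x. Phi' x * w x \<partial>p) / integral\<^sup>L p w \<le> (\<Sum>i\<in>{0..CARD('n)}. alpha i * Phi (m i) * w (m i))"
        using key[OF P iPsi iw w0 cpos lePhi ihPhi] by (elim exE conjE) (rule that; assumption)
      have "ereal ((\<integral>x. Phi' x * w x \<partial>p) / integral\<^sup>L p w) \<le> ereal (\<Sum>i\<in>{0..CARD('n)}. alpha i * Phi (m i) * w (m i))"
        using am(4) by simp
      also have "\<dots> \<le> Rv" by (rule elem[OF am(1) qZ am(2) am(3)])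
      finally show ?thesis .
    qed
    define hh where "hh x = Phi x * w x" for x
    have hhfun: "hh = (\<lambda>x. Phi x * w x)" by (simp add: fun_eq_iff hh_def)
    have hhm: "hh \<in> borel_measurable p" unfolding hh_def using mp[OF hm] .
    have pe: "post_exp p D Phi B = ext_integral p hh / ereal (integral\<^sup>L p w)"
      by (simp add: post_exp_def hhfun wfun)
    show "post_exp p D Phi B \<le> Rv"
    proof (cases "integrable p hh")
      case True
      have "post_exp p D Phi B = ereal (integral\<^sup>L p hh / integral\<^sup>L p w)"
        unfolding pe ext_integral_integrable[OF True] using cpos by simp
      also have "\<dots> \<le> Rv" using keyR[of Phi] True by (simp add: hhfun)
      finally show ?thesis .
    next
      case False
      define Pp where "Pp = (\<integral>\<^sup>+ x. ennreal (hh x) \<partial>p)"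
      define Nn where "Nn = (\<integral>\<^sup>+ x. ennreal (- hh x) \<partial>p)"
      have t1: "(\<integral>\<^sup>+ x. ennreal (norm (hh x)) \<partial>p) = \<infinity>"
        using False hhm unfolding integrable_iff_bounded by (simp add: less_top[symmetric])
      have t2: "(\<integral>\<^sup>+ x. ennreal (norm (hh x)) \<partial>p) = Pp + Nn"
        unfolding Pp_def Nn_def real_norm_def ennreal_abs_split
        by (rule nn_integral_add) (use hhm in auto)
      have "Pp + Nn = \<infinity>" using t1 t2 by simp
      then have PN: "Pp = \<infinity> \<or> Nn = \<infinity>" by (simp add: ennreal_add_eq_top)
      have ext: "ext_integral p hh = enn2ereal Pp - enn2ereal Nn"
        by (simp add: ext_integral_def Pp_def Nn_def)
      have emb: "(\<integral>\<^sup>+ x. ennreal (k x) \<partial>p) \<le> ennreal K" if "\<And>x. k x \<le> K" for k :: "'a \<Rightarrow> real" and K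
      proof -
        have "(\<integral>\<^sup>+ x. ennreal (k x) \<partial>p) \<le> (\<integral>\<^sup>+ x. ennreal K \<partial>p)"
          by (intro nn_integral_mono ennreal_leI that)
        also have "\<dots> = ennreal K" using prob_space.emeasure_space_1[OF P] by simp
        finally show ?thesis .
      qed
      show ?thesis
      proof (cases "bdd_above (range Phi)")
        case True
        then obtain M where M: "\<And>x. Phi x \<le> M" by (auto simp: bdd_above_def)
        have "hh x \<le> \<bar>M\<bar>" for x
        proof -
          have "hh x \<le> max 0 (Phi x) * w x" unfolding hh_def using w0[of x] by (intro mult_right_mono) auto
          also have "\<dots> \<le> max 0 (Phi x)" using w1[of x] by (intro mult_left_le) auto
          also have "\<dots> \<le> \<bar>M\<bar>" using M[of x] by auto
          finally show ?thesis .
        qed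
        then have "Pp \<le> ennreal \<bar>M\<bar>" unfolding Pp_def by (rule emb)
        then have "Pp \<noteq> \<infinity>" by (auto simp: top_unique)
        then have "Nn = \<infinity>" using PN by simp
        then have "ext_integral p hh = - \<infinity>" unfolding ext using \<open>Pp \<noteq> \<infinity>\<close>
          by (cases Pp) auto
        then have "post_exp p D Phi B = - \<infinity>" unfolding pe using cpos by simp
        then show ?thesis by simp
      next
        case False
        then have "bdd_below (range Phi)" using Phi_semibounded by simp
        then obtain m0 where m0: "\<And>x. m0 \<le> Phi x" by (auto simp: bdd_below_def)
        define a where "a = \<bar>m0\<bar>"
        have a0: "0 \<le> a" by (simp add: a_def)
        have Phia: "- a \<le> Phi x" for x using m0[of x] by (simp add: a_def)
        have "- hh x \<le> a" for x
          using lower_mult_bound[OF Phia[of x] a0 w0[of x] w1[of x]] by (simp add: hh_def)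
        then have "Nn \<le> ennreal a" unfolding Nn_def by (rule emb)
        then have "Nn \<noteq> \<infinity>" by (auto simp: top_unique)
        then have Ppi: "Pp = \<infinity>" using PN by simp
        have "Rv = \<infinity>"
        proof (rule ereal_top)
          fix r :: real
          show "ereal r \<le> Rv"
          proof (rule ccontr)
            assume nle: "\<not> ereal r \<le> Rv"
            define hN where "hN N x = min (Phi x) (real N) * w x" for N x
            have hNfun: "hN N = (\<lambda>x. min (Phi x) (real N) * w x)" for N by (simp add: fun_eq_iff hN_def)
            have hNm: "hN N \<in> borel_measurable borel" for N unfolding hN_def using Phi_meas wm by measurable
            have hNlow: "- a \<le> hN N x" for N x
              unfolding hN_def using Phia[of x] a0 by (intro lower_mult_bound[OF _ a0 w0 w1]) auto
            have hNup: "hN N x \<le> real N" for N x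
            proof -
              have "hN N x \<le> max 0 (min (Phi x) (real N)) * w x" unfolding hN_def using w0[of x] by (intro mult_right_mono) auto
              also have "\<dots> \<le> max 0 (min (Phi x) (real N))" using w1[of x] by (intro mult_left_le) auto
              also have "\<dots> \<le> real N" by auto
              finally show ?thesis .
            qed
            have ihN: "integrable p (hN N)" for N
            proof (rule bnd[OF hNm[of N], where K = "a + real N"])
              fix x
              show "\<bar>hN N x\<bar> \<le> a + real N"
                using hNlow[of N x] hNup[of N x] a0 of_nat_0_le_iff[of N] unfolding abs_le_iff by linarith
            qed
            have bndN: "(\<integral>\<^sup>+ x. ennreal (hN N x) \<partial>p) \<le> ennreal (r * integral\<^sup>L p w + a)" for N
            proof -
              have kN: "ereal ((\<integral>x. hN N x \<partial>p) / integral\<^sup>L p w) \<le> Rv"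
                unfolding hN_def by (rule keyR) (use ihN[of N] in \<open>auto simp: hNfun\<close>)
              have "(\<integral>x. hN N x \<partial>p) / integral\<^sup>L p w \<le> r"
              proof (rule ccontr)
                assume "\<not> (\<integral>x. hN N x \<partial>p) / integral\<^sup>L p w \<le> r"
                then have "ereal r \<le> ereal ((\<integral>x. hN N x \<partial>p) / integral\<^sup>L p w)" by simp
                from this kN have "ereal r \<le> Rv" by (rule order_trans)
                then show False using nle by simp
              qed
              then have le_r: "(\<integral>x. hN N x \<partial>p) \<le> r * integral\<^sup>L p w"
                using cpos by (simp add: divide_le_eq)
              have ia: "integrable p (\<lambda>x. hN N x + a)"
                using ihN[of N] fmp by (intro Bochner_Integration.integrable_add) (auto intro: finite_measure.integrable_const)
              have "(\<integral>\<^sup>+ x. ennreal (hN N x) \<partial>p) \<le> (\<integral>\<^sup>+ x. ennreal (hN N x + a) \<partial>p)"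
                using a0 by (intro nn_integral_mono ennreal_leI) auto
              also have "\<dots> = ennreal (\<integral>x. hN N x + a \<partial>p)"
                by (rule nn_integral_eq_integral[OF ia]) (use hNlow in \<open>auto intro!: AE_I2 simp: add.commute[of _ a] add_nonneg_nonneg\<close>; smt (verit) hNlow)
              also have "(\<integral>x. hN N x + a \<partial>p) = (\<integral>x. hN N x \<partial>p) + a"
                using ihN[of N] fmp P by (subst Bochner_Integration.integral_add) (auto intro: finite_measure.integrable_const simp: prob_space.prob_space)
              also have "ennreal \<dots> \<le> ennreal (r * integral\<^sup>L p w + a)"
                using le_r by (intro ennreal_leI) simp
              finally show ?thesis .
            qed
            have inc: "incseq (\<lambda>N x. ennreal (hN N x))"
              unfolding incseq_def le_fun_def hN_def using w0
              by (auto intro!: ennreal_leI mult_right_mono)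
            have sup_eq: "(SUP N. ennreal (hN N x)) = ennreal (hh x)" for x
            proof (rule antisym)
              show "(SUP N. ennreal (hN N x)) \<le> ennreal (hh x)"
                unfolding hN_def hh_def using w0 by (auto intro!: SUP_least ennreal_leI mult_right_mono)
              obtain N where "Phi x \<le> real N" using real_arch_simple by blast
              then have "hN N x = hh x" by (simp add: hN_def hh_def)
              then show "ennreal (hh x) \<le> (SUP N. ennreal (hN N x))"
                by (intro SUP_upper2[of N]) auto
            qed
            have hNmp: "(\<lambda>x. ennreal (hN N x)) \<in> borel_measurable p" for N
              using mp[OF hNm] by measurable
            have "Pp = (\<integral>\<^sup>+ x. (SUP N. ennreal (hN N x)) \<partial>p)" unfolding Pp_def sup_eq ..
            also have "\<dots> = (SUP N. (\<integral>\<^sup>+ x. ennreal (hN N x) \<partial>p))"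
              by (rule nn_integral_monotone_convergence_SUP[OF inc hNmp])
            also have "\<dots> \<le> ennreal (r * integral\<^sup>L p w + a)" by (intro SUP_least bndN)
            finally show False using Ppi by (simp add: top_unique)
          qed
        qed
        then show ?thesis by simp
      qed
    qed
  qed
  have le2: "Rv \<le> U_post (PiZ Psi Z) D Phi B"
    unfolding Rv_def
  proof (rule SUP_least)
    fix x assume "x \<in> ?RS"
    then obtain alpha q m where x: "x = (alpha, q, m)" and a0: "\<forall>i\<in>{0..CARD('n)}. alpha i \<ge> 0"
      and qZ: "q \<in> Z" and c1: "(\<Sum>i\<in>{0..CARD('n)}. alpha i *\<^sub>R (Psi (m i) - q)) = 0"
      and c2: "(\<Sum>i\<in>{0..CARD('n)}. alpha i * w (m i)) = 1"
      by (auto simp: w_def)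
    define S where "S = (\<Sum>i\<in>{0..CARD('n)}. alpha i)"
    have "1 \<le> S"
    proof -
      have "(\<Sum>i\<in>{0..CARD('n)}. alpha i * w (m i)) \<le> S"
        unfolding S_def using a0 w1 by (intro sum_mono) (auto intro: mult_left_le)
      then show ?thesis using c2 by simp
    qed
    then have Spos: "S > 0" by simp
    define p where "p = fsm CARD('n) alpha m"
    note ff = fsm_facts[where m = m, OF a0 Spos[unfolded S_def], folded p_def S_def]
    have ipsi: "integrable p Psi" and intpsi: "integral\<^sup>L p Psi = (\<Sum>i\<in>{0..CARD('n)}. (alpha i / S) *\<^sub>R Psi (m i))"
      using ff(2)[OF Psi_meas] by auto
    have "(\<Sum>i\<in>{0..CARD('n)}. alpha i *\<^sub>R Psi (m i)) = (\<Sum>i\<in>{0..CARD('n)}. alpha i *\<^sub>R q)"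
      using c1 by (simp add: scaleR_diff_right sum_subtractf)
    also have "\<dots> = S *\<^sub>R q" by (simp add: S_def scaleR_sum_left)
    finally have sp: "(\<Sum>i\<in>{0..CARD('n)}. alpha i *\<^sub>R Psi (m i)) = S *\<^sub>R q" .
    have "integral\<^sup>L p Psi = (1 / S) *\<^sub>R (\<Sum>i\<in>{0..CARD('n)}. alpha i *\<^sub>R Psi (m i))"
      unfolding intpsi by (simp add: scaleR_sum_right)
    then have ePsi: "integral\<^sup>L p Psi = q" using Spos sp by simp
    have intw: "integral\<^sup>L p w = 1 / S"
    proof -
      have "integral\<^sup>L p w = (\<Sum>i\<in>{0..CARD('n)}. (alpha i / S) * w (m i))"
        using ff(2)[OF wm] by simp
      also have "\<dots> = (\<Sum>i\<in>{0..CARD('n)}. alpha i * w (m i)) / S"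
        by (simp add: sum_divide_distrib)
      finally show ?thesis using c2 by simp
    qed
    have pA: "p \<in> space (prob_algebra borel)" by (rule ff(1))
    have pin: "p \<in> Pi_cond (PiZ Psi Z) D B"
      unfolding Pi_cond_def PiZ_def using pA ipsi ePsi qZ intw Spos by (simp add: w_def[symmetric])
    define V where "V = (\<Sum>i\<in>{0..CARD('n)}. alpha i * Phi (m i) * w (m i))"
    have ih: "integrable p (\<lambda>x. Phi x * w x)" and inth: "integral\<^sup>L p (\<lambda>x. Phi x * w x) = V / S"
    proof -
      show "integrable p (\<lambda>x. Phi x * w x)" using ff(2)[OF hm] by simp
      have "integral\<^sup>L p (\<lambda>x. Phi x * w x) = (\<Sum>i\<in>{0..CARD('n)}. (alpha i / S) * (Phi (m i) * w (m i)))"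
        using ff(2)[OF hm] by simp
      also have "\<dots> = V / S" by (simp add: V_def sum_divide_distrib mult.assoc)
      finally show "integral\<^sup>L p (\<lambda>x. Phi x * w x) = V / S" .
    qed
    have "post_exp p D Phi B = ereal (V / S) / ereal (1 / S)"
      unfolding post_exp_def w_def[symmetric] ext_integral_integrable[OF ih] inth intw ..
    also have "\<dots> = ereal V" using Spos by simp
    finally have pe: "post_exp p D Phi B = ereal V" .
    have "ereal V \<le> U_post (PiZ Psi Z) D Phi B"
      unfolding U_post_def pe[symmetric] by (rule SUP_upper[OF pin])
    then show "(case x of (alpha, q, m) \<Rightarrow> ?F alpha q m) \<le> U_post (PiZ Psi Z) D Phi B"
      unfolding x V_def w_def by simp
  qed
  show ?thesis using le1 le2 unfolding Rv_def by (rule antisym)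
qed

end
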